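(* Let $\mathcal{A}$ be a safe GTA without renamings with clock set $X=X_F\uplus X_H$, and let $M\in\mathbb{N}$ be such that every finite constant $c$ appearing in a guard of $\mathcal{A}$ satisfies $|c|\le M$. Then $\approx_M$ is a time-abstract bisimulation: for all valuations $v_1\approx_M v_2$, (a) for every $\delta_1\ge 0$ such that $v_1+\delta_1$ is a valuation there is $\delta_2\ge 0$ such that $v_2+\delta_2$ is a valuation and $v_1+\delta_1\approx_M v_2+\delta_2$; and (b) for every transition $t$ of $\mathcal{A}$ and state $q$, if $(q,v_1)\xrightarrow{t}(q',v_1')$ then there is $v_2'$ with $(q,v_2)\xrightarrow{t}(q',v_2')$ and $v_1'\approx_M v_2'$ (and symmetrically with the roles of $v_1,v_2$ exchanged).
   Context: Clocks, valuations, constraints: $X=X_F\uplus X_H$ finite, future clocks $X_F$, history clocks $X_H$, plus constant clock $0$. $\overline{\mathbb{R}}=\mathbb{R}\cup\{\pm\infty\}$ with $(+\infty)+\alpha=+\infty$, $(-\infty)+\beta=-\infty$ for $\beta\ne+\infty$, $-(\pm\infty)=\mp\infty$. A valuation $v:X\cup\{0\}\to\overline{\mathbb{R}}$ has $v(0)=0$, history clocks in $\mathbb{R}_{\ge0}\cup\{+\infty\}$, future clocks in $\mathbb{R}_{\le0}\cup\{-\infty\}$. Constraints are conjunctions of $x-y\triangleleft c$ ($x,y\in X\cup\{0\}$, ${\triangleleft}\in\{<,\le\}$, $c\in\mathbb{Z}\cup\{\pm\infty\}$), $v\models x-y\triangleleft c$ iff $v(x)-v(y)\triangleleft c$. $v+\delta$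 adds $\delta$ to every clock; $[R]v$ ($R\subseteq X$) is the set of $v'$ with $v'(x)=0$ for $x\in R\cap X_H$, $v'(x)=v(x)$ for $x\notin R$, arbitrary for $x\in R\cap X_F$. A GTA without renamings $\mathcal{A}=(Q,\Sigma,X,\Delta,\mathcal{I},Q_f)$ has transitions $(q,a,\mathsf{prog},q')$ where $\mathsf{prog}$ is a sequence of guards $g$ (with $v\xrightarrow{g}v$ iff $v\models g$) and changes $[R]$ (with $v\xrightarrow{[R]}v'$ iff $v'\in[R]v$); $(q,v)\xrightarrow{t}(q',v')$ iff $t=(q,a,\mathsf{prog},q')$ and $v\xrightarrow{\mathsf{prog}}v'$. Safety: with $X_D$ the future clocks occurring in guards $x-y\triangleleft c$ with $x,y\in X_F$, every program checks each clock of $X_D$ to be $0$ or $-\infty$ before releasing it, and initial guards force history clocks to $0$ or $+\infty$. For $\alpha\in\mathbb{R}$, $\lfloor\alpha\rfloor$ is its integer part and $\{\alpha\}=\alpha-\lfloor\alpha\rfloor$. Equivalence $\approx_M$: $v_1\approx_M v_2$ iff for all clocks $x,y$: (1) $v_1(x)\triangleleft c$ iff $v_2(x)\triangleleft c$ for all ${\triangleleft}\in\{<,\le\}$ and all $c\in\{-\infty,+\infty\}$ or $c\in\mathbb{Z}$ with $c\le M$; (2) $v_1\models x-y\triangleleft c$ iff $v_2\models x-y\triangleleft c$ for all ${\triangleleft}\in\{<,\le\}$ and $c\in\{\pm\infty\}$ or $c\in\mathbb{Z}$ with $|c|\le M$; (3) if $-\infty<v_1(x),v_1(y)\le M$ then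 $\{v_1(x)\}\le\{v_1(y)\}$ iff $\{v_2(x)\}\le\{v_2(y)\}$. *)

theory Defs
  imports Complex_Main "HOL-Library.Extended_Real"
begin

text \<open>Clocks are the elements of a finite type 'c (this type is the clock set X).
  The future clocks are a set XF, the history clocks are the rest (X_H = UNIV - XF).
  Clock terms additionally contain the constant clock 0.\<close>

datatype 'c clk = Zero | Clk 'c

datatype rel = Lt | Le

text \<open>An atomic constraint (x, y, r, c) stands for  x - y r c.\<close>
type_synonym 'c atom = "'c clk \<times> 'c clk \<times> rel \<times> ereal"
type_synonym 'c guard = "'c atom list"

datatype 'c instr = Guard "'c guard" | Change "'c set"
type_synonym 'c prog = "'c instr list"

type_synonym 'c val = "'c \<Rightarrow> ereal"

fun cv :: "'c val \<Rightarrow> 'c clk \<Rightarrow> ereal" where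
  "cv v Zero = 0"
| "cv v (Clk x) = v x"

definition ediff :: "ereal \<Rightarrow> ereal \<Rightarrow> ereal" where
  "ediff a b = a + - b"

fun holds :: "rel \<Rightarrow> ereal \<Rightarrow> ereal \<Rightarrow> bool" where
  "holds Lt a b = (a < b)"
| "holds Le a b = (a \<le> b)"

fun sat_atom :: "'c val \<Rightarrow> 'c atom \<Rightarrow> bool" where
  "sat_atom v (x, y, r, c) = holds r (ediff (cv v x) (cv v y)) c"

definition sat :: "'c val \<Rightarrow> 'c guard \<Rightarrow> bool" where
  "sat v g = (\<forall>a\<in>set g. sat_atom v a)"

definition is_val :: "'c set \<Rightarrow> 'c val \<Rightarrow> bool" where
  "is_val XF v = (\<forall>x. (x \<in> XF \<longrightarrow> v x \<le> 0) \<and> (x \<notin> XF \<longrightarrow> 0 \<le> v x))"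

definition shift :: "'c val \<Rightarrow> real \<Rightarrow> 'c val" where
  "shift v d = (\<lambda>x. v x + ereal d)"

definition change :: "'c set \<Rightarrow> 'c set \<Rightarrow> 'c val \<Rightarrow> 'c val set" where
  "change XF R v = {v'. is_val XF v' \<and> (\<forall>x\<in>R - XF. v' x = 0) \<and> (\<forall>x. x \<notin> R \<longrightarrow> v' x = v x)}"

fun exec :: "'c set \<Rightarrow> 'c prog \<Rightarrow> 'c val \<Rightarrow> 'c val set" where
  "exec XF [] v = {v}"
| "exec XF (Guard g # p) v = (if sat v g then exec XF p v else {})"
| "exec XF (Change R # p) v = (\<Union>v'\<in>change XF R v. exec XF p v')"

record ('q, 's, 'c) gta =
  states :: "'q set"
  alph :: "'s set"
  trans :: "('q \<times> 's \<times> 'c prog \<times> 'q) set"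
  init :: "('q \<times> 'c guard) set"
  final :: "'q set"

definition step :: "'c set \<Rightarrow> ('q, 's, 'c) gta \<Rightarrow> 'q \<Rightarrow> 'c val \<Rightarrow>
    ('q \<times> 's \<times> 'c prog \<times> 'q) \<Rightarrow> 'q \<Rightarrow> 'c val \<Rightarrow> bool" where
  "step XF A q v t q' v' =
     (t \<in> trans A \<and> (\<exists>a p. t = (q, a, p, q') \<and> v' \<in> exec XF p v))"

definition prog_guards :: "'c prog \<Rightarrow> 'c atom set" where
  "prog_guards p = (\<Union>i\<in>set p. case i of Guard g \<Rightarrow> set g | Change _ \<Rightarrow> {})"

definition trans_atoms :: "('q, 's, 'c) gta \<Rightarrow> 'c atom set" where
  "trans_atoms A = (\<Union>(q, a, p, q')\<in>trans A. prog_guards p)"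

definition init_atoms :: "('q, 's, 'c) gta \<Rightarrow> 'c atom set" where
  "init_atoms A = (\<Union>(q, g)\<in>init A. set g)"

definition is_const :: "ereal \<Rightarrow> bool" where
  "is_const c = (c = \<infinity> \<or> c = -\<infinity> \<or> (\<exists>k::int. c = ereal (real_of_int k)))"

definition wf_gta :: "('q, 's, 'c) gta \<Rightarrow> bool" where
  "wf_gta A =
    (finite (states A) \<and> finite (alph A) \<and> finite (trans A) \<and> finite (init A) \<and>
     (\<forall>(q, a, p, q')\<in>trans A. q \<in> states A \<and> a \<in> alph A \<and> q' \<in> states A) \<and>
     (\<forall>(q, g)\<in>init A. q \<in> states A) \<and> final A \<subseteq> states A \<and>
     (\<forall>(x, y, r, c)\<in>trans_atoms A \<union> init_atoms A. is_const c))"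

definition XD :: "'c set \<Rightarrow> ('q, 's, 'c) gta \<Rightarrow> 'c set" where
  "XD XF A = {z. \<exists>x y r c. (Clk x, Clk y, r, c) \<in> trans_atoms A \<and> x \<in> XF \<and> y \<in> XF \<and>
                  (z = x \<or> z = y)}"

text \<open>Safety: every program ensures that each clock of X_D is 0 or -oo whenever it is
  released (i.e. just before every change [R] with the clock in R), and initial guards force
  history clocks to be 0 or +oo.\<close>
definition safe :: "'c set \<Rightarrow> ('q, 's, 'c) gta \<Rightarrow> bool" where
  "safe XF A =
    ((\<forall>(q, a, p, q')\<in>trans A. \<forall>i<length p. \<forall>R. p ! i = Change R \<longrightarrow>
        (\<forall>v u x. is_val XF v \<longrightarrow> u \<in> exec XF (take i p) v \<longrightarrow> x \<in> R \<inter> XD XF A \<longrightarrow>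
           u x = 0 \<or> u x = -\<infinity>)) \<and>
     (\<forall>(q, g)\<in>init A. \<forall>v. is_val XF v \<longrightarrow> sat v g \<longrightarrow>
        (\<forall>x. x \<notin> XF \<longrightarrow> v x = 0 \<or> v x = \<infinity>)))"

definition bounded_by :: "nat \<Rightarrow> ('q, 's, 'c) gta \<Rightarrow> bool" where
  "bounded_by M A =
    (\<forall>(x, y, r, c)\<in>trans_atoms A. \<bar>c\<bar> \<noteq> \<infinity> \<longrightarrow> \<bar>c\<bar> \<le> ereal (real M))"

definition approx :: "nat \<Rightarrow> 'c val \<Rightarrow> 'c val \<Rightarrow> bool" where
  "approx M v1 v2 =
    ((\<forall>x r c. (c = \<infinity> \<or> c = -\<infinity> \<or> (\<exists>k::int. c = ereal (real_of_int k) \<and> k \<le> int M)) \<longrightarrow>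
        (holds r (cv v1 x) c \<longleftrightarrow> holds r (cv v2 x) c)) \<and>
     (\<forall>x y r c. (c = \<infinity> \<or> c = -\<infinity> \<or> (\<exists>k::int. c = ereal (real_of_int k) \<and> \<bar>k\<bar> \<le> int M)) \<longrightarrow>
        (holds r (ediff (cv v1 x) (cv v1 y)) c \<longleftrightarrow> holds r (ediff (cv v2 x) (cv v2 y)) c)) \<and>
     (\<forall>x y. -\<infinity> < cv v1 x \<and> cv v1 x \<le> ereal (real M) \<and> -\<infinity> < cv v1 y \<and> cv v1 y \<le> ereal (real M) \<longrightarrow>
        (frac (real_of_ereal (cv v1 x)) \<le> frac (real_of_ereal (cv v1 y)) \<longleftrightarrow>
         frac (real_of_ereal (cv v2 x)) \<le> frac (real_of_ereal (cv v2 y)))))"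

definition ta_sim :: "'c set \<Rightarrow> ('q, 's, 'c) gta \<Rightarrow> ('c val \<Rightarrow> 'c val \<Rightarrow> bool) \<Rightarrow> bool" where
  "ta_sim XF A Rel =
    (\<forall>v1 v2. is_val XF v1 \<and> is_val XF v2 \<and> Rel v1 v2 \<longrightarrow>
       (\<forall>d1::real. d1 \<ge> 0 \<and> is_val XF (shift v1 d1) \<longrightarrow>
          (\<exists>d2::real. d2 \<ge> 0 \<and> is_val XF (shift v2 d2) \<and> Rel (shift v1 d1) (shift v2 d2))) \<and>
       (\<forall>t q q' v1'. step XF A q v1 t q' v1' \<longrightarrow>
          (\<exists>v2'. step XF A q v2 t q' v2' \<and> Rel v1' v2')))"

definition ta_bisim :: "'c set \<Rightarrow> ('q, 's, 'c) gta \<Rightarrow> ('c val \<Rightarrow> 'c val \<Rightarrow> bool) \<Rightarrow> bool" where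
  "ta_bisim XF A Rel = (ta_sim XF A Rel \<and> ta_sim XF A (\<lambda>v1 v2. Rel v2 v1))"

end

theory Submission
  imports Defs
begin


lemma diff_int:
  fixes p1 q1 p2 q2 :: real and k :: int
  assumes "floor p1 = floor p2" "floor q1 = floor q2"
    "frac p1 \<le> frac q1 \<longleftrightarrow> frac p2 \<le> frac q2"
    "frac q1 \<le> frac p1 \<longleftrightarrow> frac q2 \<le> frac p2"
  shows "(p1 - q1 < k \<longleftrightarrow> p2 - q2 < k) \<and> (p1 - q1 \<le> k \<longleftrightarrow> p2 - q2 \<le> k)"
proof -
  have e1: "p1 - q1 = of_int (floor p1 - floor q1) + (frac p1 - frac q1)"
    and e2: "p2 - q2 = of_int (floor p1 - floor q1) + (frac p2 - frac q2)"
    using assms by (simp_all add: frac_def)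
  define m where "m = k - (floor p1 - floor q1)"
  have r: "0 \<le> frac p1" "frac p1 < 1" "0 \<le> frac q1" "frac q1 < 1"
     "0 \<le> frac p2" "frac p2 < 1" "0 \<le> frac q2" "frac q2 < 1"
    by (simp_all add: frac_lt_1)
  have k: "real_of_int k = of_int (floor p1 - floor q1) + of_int m" by (simp add: m_def)
  consider "m \<ge> 1" | "m \<le> -1" | "m = 0" by linarith
  then show ?thesis
  proof cases
    case 1 then have "real_of_int m \<ge> 1" by simp
    then show ?thesis unfolding e1 e2 k using r by linarith
  next
    case 2 then have "real_of_int m \<le> -1" by simp
    then show ?thesis unfolding e1 e2 k using r by linarith
  next
    case 3 then show ?thesis unfolding e1 e2 k using assms(3,4) by auto
  qed
qed

lemma ext_point:
  fixes P :: "(real \<times> real) set" and t :: real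
  assumes fin: "finite P" and z: "(0,0) \<in> P"
    and rng: "\<forall>(p,q)\<in>P. 0 \<le> q \<and> q < 1"
    and iso: "\<forall>(p,q)\<in>P. \<forall>(p',q')\<in>P. p \<le> p' \<longleftrightarrow> q \<le> q'"
    and t: "0 \<le> t" "t < 1"
  shows "\<exists>t'. 0 \<le> t' \<and> t' < 1 \<and> (\<forall>(p,q)\<in>P. (p \<le> t \<longleftrightarrow> q \<le> t') \<and> (t \<le> p \<longleftrightarrow> t' \<le> q))"
proof (cases "\<exists>q. (t,q) \<in> P")
  case True
  then obtain q where q: "(t,q) \<in> P" by blast
  show ?thesis
    apply (rule exI[of _ q])
    using q rng iso by fastforce
next
  case False
  then have tpos: "0 < t" using z t by (cases "t = 0") auto
  define L where "L = snd ` {pq\<in>P. fst pq < t}"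
  define U where "U = insert 1 (snd ` {pq\<in>P. t < fst pq})"
  have Lfin: "finite L" "L \<noteq> {}" unfolding L_def using fin z tpos by force+
  have Ufin: "finite U" "U \<noteq> {}" unfolding U_def using fin by auto
  have LU: "\<forall>l\<in>L. \<forall>u\<in>U. l < u"
  proof (intro ballI)
    fix l u assume l: "l \<in> L" and u: "u \<in> U"
    from l obtain p where pl: "(p,l) \<in> P" "p < t" unfolding L_def by force
    show "l < u"
    proof (cases "u = 1")
      case True then show ?thesis using pl rng by auto
    next
      case False
      then obtain p' where pu: "(p',u) \<in> P" "t < p'" using u unfolding U_def by force
      have "\<not> p' \<le> p" using pl pu by auto
      then have "\<not> u \<le> l" using iso pl pu by fastforce
      then show ?thesis by simp
    qed
  qed
  define t' where "t' = (Max L + Min U) / 2"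
  have mm: "Max L < Min U" using LU Lfin Ufin by simp
  have t'1: "Max L < t'" "t' < Min U" using mm unfolding t'_def by simp_all
  have "Min U \<le> 1" using Ufin unfolding U_def by simp
  moreover have "0 \<le> Max L"
  proof -
    have "0 \<in> L" unfolding L_def using z tpos by force
    then show ?thesis using Lfin by simp
  qed
  moreover have "\<forall>(p,q)\<in>P. (p \<le> t \<longleftrightarrow> q \<le> t') \<and> (t \<le> p \<longleftrightarrow> t' \<le> q)"
  proof (intro ballI, clarify)
    fix p q assume pq: "(p,q) \<in> P"
    have "p \<noteq> t" using pq False by auto
    then consider "p < t" | "t < p" by linarith
    then show "(p \<le> t \<longleftrightarrow> q \<le> t') \<and> (t \<le> p \<longleftrightarrow> t' \<le> q)"
    proof cases
      case 1
      then have "q \<in> L" unfolding L_def using pq by force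
      then have "q \<le> Max L" using Lfin by simp
      then show ?thesis using 1 t'1 by auto
    next
      case 2
      then have "q \<in> U" unfolding U_def using pq by force
      then have "Min U \<le> q" using Ufin by simp
      then show ?thesis using 2 t'1 by auto
    qed
  qed
  ultimately show ?thesis using t'1 by (intro exI[of _ t']) auto
qed

lemma shift_real:
  fixes p d :: real
  defines "t \<equiv> frac (- d)"
  shows "floor (p + d) = floor p + ceiling d - (if frac p < t then 1 else 0)"
    and "frac (p + d) = (if frac p < t then frac p - t + 1 else frac p - t)"
proof -
  have dd: "d = of_int (ceiling d) - t" unfolding t_def frac_def
    by (simp add: ceiling_def)
  have p: "p = of_int (floor p) + frac p" by (simp add: frac_def)
  have r: "0 \<le> frac p" "frac p < 1" "0 \<le> t" "t < 1" unfolding t_def by (simp_all add: frac_lt_1)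
  have pd: "p + d = of_int (floor p + ceiling d) + (frac p - t)"
  proof -
    have "real_of_int (floor p + ceiling d) = of_int (floor p) + of_int (ceiling d)" by simp
    then show ?thesis using dd p by linarith
  qed
  show f: "floor (p + d) = floor p + ceiling d - (if frac p < t then 1 else 0)"
    using r pd frac_ge_0[of p] by (intro floor_unique; auto; linarith)
  show "frac (p + d) = (if frac p < t then frac p - t + 1 else frac p - t)"
    unfolding frac_def[of "p+d"] f using pd by auto
qed


definition rv :: "'c val \<Rightarrow> 'c clk \<Rightarrow> real" where
  "rv v z = real_of_ereal (cv v z)"

definition small :: "nat \<Rightarrow> 'c val \<Rightarrow> 'c clk \<Rightarrow> bool" where
  "small M v z = (-\<infinity> < cv v z \<and> cv v z \<le> ereal (real M))"

definition sim1 :: "nat \<Rightarrow> 'c val \<Rightarrow> 'c val \<Rightarrow> 'c clk \<Rightarrow> bool" where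
  "sim1 M v1 v2 z = ((cv v1 z = -\<infinity> \<longleftrightarrow> cv v2 z = -\<infinity>) \<and> (cv v1 z = \<infinity> \<longleftrightarrow> cv v2 z = \<infinity>) \<and>
     (cv v1 z \<le> ereal (real M) \<longleftrightarrow> cv v2 z \<le> ereal (real M)) \<and>
     (small M v1 z \<longrightarrow> floor (rv v1 z) = floor (rv v2 z)))"

definition cond1 :: "nat \<Rightarrow> ereal \<Rightarrow> bool" where
  "cond1 M c = (c = \<infinity> \<or> c = -\<infinity> \<or> (\<exists>k::int. c = ereal (real_of_int k) \<and> k \<le> int M))"

definition cond2 :: "nat \<Rightarrow> ereal \<Rightarrow> bool" where
  "cond2 M c = (c = \<infinity> \<or> c = -\<infinity> \<or> (\<exists>k::int. c = ereal (real_of_int k) \<and> \<bar>k\<bar> \<le> int M))"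

lemma approx_alt: "approx M v1 v2 =
    ((\<forall>x r c. cond1 M c \<longrightarrow> (holds r (cv v1 x) c \<longleftrightarrow> holds r (cv v2 x) c)) \<and>
     (\<forall>x y r c. cond2 M c \<longrightarrow>
        (holds r (ediff (cv v1 x) (cv v1 y)) c \<longleftrightarrow> holds r (ediff (cv v2 x) (cv v2 y)) c)) \<and>
     (\<forall>x y. small M v1 x \<and> small M v1 y \<longrightarrow>
        (frac (rv v1 x) \<le> frac (rv v1 y) \<longleftrightarrow> frac (rv v2 x) \<le> frac (rv v2 y))))"
  unfolding approx_def cond1_def cond2_def small_def rv_def by (simp only: conj_assoc)

lemma small_fin: "small M v z \<Longrightarrow> cv v z = ereal (rv v z)"
  unfolding small_def rv_def by (cases "cv v z") auto

lemma small_Zero[simp]: "small M v Zero" by (simp add: small_def)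
lemma rv_Zero[simp]: "rv v Zero = 0" by (simp add: rv_def)

lemma holds_ereal: "holds r (ereal a) (ereal b) = (case r of Lt \<Rightarrow> a < b | Le \<Rightarrow> a \<le> b)"
  by (cases r) auto

lemma holds_inf[simp]: "holds r (ereal a) \<infinity>" "\<not> holds r (ereal a) (-\<infinity>)"
  by (cases r; simp)+

lemma pair_fin:
  fixes p1 q1 p2 q2 :: real
  assumes "floor p1 = floor p2" "floor q1 = floor q2"
    "frac p1 \<le> frac q1 \<longleftrightarrow> frac p2 \<le> frac q2"
    "frac q1 \<le> frac p1 \<longleftrightarrow> frac q2 \<le> frac p2"
    and c: "c = \<infinity> \<or> c = -\<infinity> \<or> (\<exists>k::int. c = ereal (real_of_int k))"
  shows "holds r (ediff (ereal p1) (ereal q1)) c \<longleftrightarrow> holds r (ediff (ereal p2) (ereal q2)) c"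
proof -
  have e: "ediff (ereal a) (ereal b) = ereal (a - b)" for a b by (simp add: ediff_def)
  from c consider "c = \<infinity>" | "c = -\<infinity>" | k where "c = ereal (real_of_int k)" by blast
  then show ?thesis
  proof cases
    case 3
    then show ?thesis using diff_int[OF assms(1-4), of k] unfolding e 3 holds_ereal
      by (cases r) simp_all
  qed (simp_all add: e)
qed

lemma approx_sim1:
  assumes "approx M v1 v2" shows "sim1 M v1 v2 z"
proof -
  have A: "cond1 M c \<Longrightarrow> holds r (cv v1 z) c \<longleftrightarrow> holds r (cv v2 z) c" for r c
    using assms unfolding approx_alt by blast
  have m1: "cv v1 z = -\<infinity> \<longleftrightarrow> cv v2 z = -\<infinity>"
    using A[of "-\<infinity>" Le] by (simp add: cond1_def)
  have m2: "cv v1 z = \<infinity> \<longleftrightarrow> cv v2 z = \<infinity>"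
    using A[of "\<infinity>" Lt] by (simp add: cond1_def)
  have cM: "cond1 M (ereal (real M))" unfolding cond1_def
    by (intro disjI2 exI[of _ "int M"]) simp
  have m3: "cv v1 z \<le> ereal (real M) \<longleftrightarrow> cv v2 z \<le> ereal (real M)"
    using A[OF cM, of Le] by simp
  have m4: "floor (rv v1 z) = floor (rv v2 z)" if s: "small M v1 z"
  proof -
    have s2: "small M v2 z" using s m1 m3 unfolding small_def by auto
    define k where "k = floor (rv v1 z)"
    have e1: "cv v1 z = ereal (rv v1 z)" and e2: "cv v2 z = ereal (rv v2 z)"
      using small_fin s s2 by blast+
    have le1: "rv v1 z \<le> real M" and le2: "rv v2 z \<le> real M"
      using s s2 e1 e2 unfolding small_def by (metis ereal_less_eq(3))+
    have k1: "of_int k \<le> rv v1 z" "rv v1 z < of_int k + 1" unfolding k_def by linarith+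
    have kM: "k \<le> int M" using k1 le1 by linarith
    have "\<not> rv v2 z < of_int k"
      using A[of "ereal (of_int k)" Lt] k1 kM unfolding cond1_def e1 e2 by auto
    moreover have "rv v2 z < of_int k + 1"
    proof (cases "k + 1 \<le> int M")
      case True
      then have "cond1 M (ereal (of_int (k+1)))" unfolding cond1_def by blast
      then show ?thesis
        using A[of "ereal (of_int (k+1))" Lt] k1 unfolding e1 e2 by auto
    next
      case False
      then show ?thesis using le2 by linarith
    qed
    ultimately show ?thesis unfolding k_def[symmetric] by linarith
  qed
  show ?thesis unfolding sim1_def using m1 m2 m3 m4 by blast
qed


lemma ediff_0[simp]: "ediff a 0 = a" "ediff 0 a = - a"
  by (simp_all add: ediff_def)

lemma big1: "p > real M \<Longrightarrow> cond1 M c \<Longrightarrow> holds r (ereal p) c \<longleftrightarrow> c = \<infinity>"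
  unfolding cond1_def by (cases r) auto

lemma big2: "p > real M \<Longrightarrow> cond2 M c \<Longrightarrow>
    (holds r (ereal p) c \<longleftrightarrow> c = \<infinity>) \<and> (holds r (ereal (-p)) c \<longleftrightarrow> c \<noteq> -\<infinity>)"
  unfolding cond2_def by (cases r) auto

lemma nonsmall_cases:
  assumes "\<not> small M v1 w" "sim1 M v1 v2 w"
  shows "(cv v1 w = -\<infinity> \<and> cv v2 w = -\<infinity>) \<or> (cv v1 w = \<infinity> \<and> cv v2 w = \<infinity>) \<or>
    (\<exists>p1 p2. cv v1 w = ereal p1 \<and> cv v2 w = ereal p2 \<and> p1 > real M \<and> p2 > real M)"
  using assms unfolding small_def sim1_def
  by (cases "cv v1 w"; cases "cv v2 w") auto

lemma sim1_small: "sim1 M v1 v2 z \<Longrightarrow> small M v1 z \<longleftrightarrow> small M v2 z"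
  unfolding sim1_def small_def by auto

lemma approx_intro:
  assumes S: "\<And>z. sim1 M v1 v2 z"
    and F: "\<And>y z. small M v1 y \<Longrightarrow> small M v1 z \<Longrightarrow>
       (frac (rv v1 y) \<le> frac (rv v1 z) \<longleftrightarrow> frac (rv v2 y) \<le> frac (rv v2 z))"
    and D: "\<And>x y r c. \<not>(small M v1 (Clk x) \<and> small M v1 (Clk y)) \<Longrightarrow> cond2 M c \<Longrightarrow>
       (holds r (ediff (v1 x) (v1 y)) c \<longleftrightarrow> holds r (ediff (v2 x) (v2 y)) c)"
  shows "approx M v1 v2"
proof -
  have SP: "holds r (ediff (cv v1 y) (cv v1 z)) c \<longleftrightarrow> holds r (ediff (cv v2 y) (cv v2 z)) c"
    if sy: "small M v1 y" and sz: "small M v1 z"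
      and c: "c = \<infinity> \<or> c = -\<infinity> \<or> (\<exists>k::int. c = ereal (real_of_int k))" for y z r c
  proof -
    have sy2: "small M v2 y" and sz2: "small M v2 z" using sy sz sim1_small S by blast+
    have fy: "floor (rv v1 y) = floor (rv v2 y)" and fz: "floor (rv v1 z) = floor (rv v2 z)"
      using S sy sz unfolding sim1_def by blast+
    show ?thesis
      using pair_fin[OF fy fz F[OF sy sz] F[OF sz sy] c]
      by (simp only: small_fin[OF sy] small_fin[OF sz] small_fin[OF sy2] small_fin[OF sz2])
  qed
  have P1: "holds r (cv v1 z) c \<longleftrightarrow> holds r (cv v2 z) c" if c: "cond1 M c" for z r c
  proof (cases "small M v1 z")
    case True
    have "c = \<infinity> \<or> c = -\<infinity> \<or> (\<exists>k::int. c = ereal (real_of_int k))" using c unfolding cond1_def by blast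
    from SP[OF True small_Zero this, of r] show ?thesis by simp
  next
    case False
    from nonsmall_cases[OF False S] show ?thesis
      using big1[OF _ c] by auto
  qed
  have P2: "holds r (ediff (cv v1 y) (cv v1 z)) c \<longleftrightarrow> holds r (ediff (cv v2 y) (cv v2 z)) c"
    if c: "cond2 M c" for y z r c
  proof (cases "small M v1 y \<and> small M v1 z")
    case True
    have "c = \<infinity> \<or> c = -\<infinity> \<or> (\<exists>k::int. c = ereal (real_of_int k))" using c unfolding cond2_def by blast
    then show ?thesis using SP True by blast
  next
    case False
    show ?thesis
    proof (cases y)
      case Zero
      then have ns: "\<not> small M v1 z" using False by simp
      from nonsmall_cases[OF ns S] show ?thesis
        using big2[OF _ c] Zero by auto
    next
      case (Clk x)
      show ?thesis
      proof (cases z)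
        case Zero
        then have ns: "\<not> small M v1 y" using False by simp
        from nonsmall_cases[OF ns S] show ?thesis
          using big2[OF _ c] Zero by auto
      next
        case (Clk x')
        show ?thesis using D[of x x' c r] False c \<open>y = Clk x\<close> Clk by simp
      qed
    qed
  qed
  show ?thesis unfolding approx_alt using P1 P2 F by blast
qed

lemma approx_sym: "approx M v1 v2 \<Longrightarrow> approx M v2 v1"
proof -
  assume a: "approx M v1 v2"
  have S: "sim1 M v1 v2 z" for z using approx_sim1[OF a] .
  have "small M v2 z \<Longrightarrow> small M v1 z" for z using sim1_small[OF S] by blast
  then show ?thesis using a unfolding approx_alt by metis
qed


lemma finite_clk: "finite (UNIV :: 'c::finite clk set)"
proof -
  have "(UNIV :: 'c clk set) = insert Zero (range Clk)"
    by (auto intro: clk.exhaust)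
  moreover have "finite (range (Clk :: 'c \<Rightarrow> 'c clk))" by (rule finite_imageI) simp
  ultimately show ?thesis by (metis finite_insert)
qed

definition fpairs :: "nat \<Rightarrow> 'c val \<Rightarrow> 'c val \<Rightarrow> (real \<times> real) set" where
  "fpairs M v1 v2 = (\<lambda>z. (frac (rv v1 z), frac (rv v2 z))) ` {z. small M v1 z}"

lemma fpairs_ext:
  fixes v1 v2 :: "'c::finite val"
  assumes a: "approx M v1 v2" and t: "0 \<le> t" "t < 1"
  shows "\<exists>t'. 0 \<le> t' \<and> t' < 1 \<and> (\<forall>z. small M v1 z \<longrightarrow>
     (frac (rv v1 z) \<le> t \<longleftrightarrow> frac (rv v2 z) \<le> t') \<and> (t \<le> frac (rv v1 z) \<longleftrightarrow> t' \<le> frac (rv v2 z)))"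
proof -
  have "finite (fpairs M v1 v2)" unfolding fpairs_def
    by (rule finite_imageI, rule finite_subset[OF subset_UNIV finite_clk])
  moreover have "(0,0) \<in> fpairs M v1 v2" unfolding fpairs_def
    by (rule image_eqI[of _ _ Zero]) auto
  moreover have "\<forall>(p,q)\<in>fpairs M v1 v2. 0 \<le> q \<and> q < 1" unfolding fpairs_def
    by (auto simp: frac_lt_1)
  moreover have "\<forall>(p,q)\<in>fpairs M v1 v2. \<forall>(p',q')\<in>fpairs M v1 v2. p \<le> p' \<longleftrightarrow> q \<le> q'"
    using a unfolding fpairs_def approx_alt by auto
  ultimately obtain t' where "0 \<le> t'" "t' < 1"
    "\<forall>(p,q)\<in>fpairs M v1 v2. (p \<le> t \<longleftrightarrow> q \<le> t') \<and> (t \<le> p \<longleftrightarrow> t' \<le> q)"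
    using ext_point[OF _ _ _ _ t] by blast
  then show ?thesis unfolding fpairs_def by (intro exI[of _ t']) auto
qed

lemma ediff_ereal[simp]: "ediff (ereal a) (ereal b) = ereal (a - b)"
  by (simp add: ediff_def)

lemma ediff_minf: "ediff (-\<infinity>) w = (if w = -\<infinity> then \<infinity> else -\<infinity>)" "ediff w (-\<infinity>) = \<infinity>"
  unfolding ediff_def by (cases w; simp)+

lemma cv_upd: "cv (v(x:=a)) z = (if z = Clk x then a else cv v z)"
  by (cases z) auto

lemma approx_upd:
  fixes v1 v2 :: "'c::finite val"
  assumes a: "approx M v1 v2" and a0: "a \<le> 0"
  shows "\<exists>b. approx M (v1(x:=a)) (v2(x:=b))"
proof (cases "a = -\<infinity>")
  case True
  have S0: "sim1 M v1 v2 z" for z using approx_sim1[OF a] .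
  let ?u1 = "v1(x:=-\<infinity>)" and ?u2 = "v2(x:=-\<infinity>)"
  have "approx M ?u1 ?u2"
  proof (rule approx_intro)
    fix z show "sim1 M ?u1 ?u2 z"
      using S0[of z] unfolding sim1_def small_def rv_def cv_upd by auto
  next
    fix y z assume "small M ?u1 y" "small M ?u1 z"
    then have "y \<noteq> Clk x" "z \<noteq> Clk x" "small M v1 y" "small M v1 z"
      unfolding small_def cv_upd by (auto split: if_splits)
    then show "(frac (rv ?u1 y) \<le> frac (rv ?u1 z)) = (frac (rv ?u2 y) \<le> frac (rv ?u2 z))"
      using a unfolding approx_alt rv_def cv_upd by auto
  next
    fix y z r c assume c: "cond2 M c"
    have o: "holds r (ediff (v1 y) (v1 z)) c = holds r (ediff (v2 y) (v2 z)) c"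
      using a c unfolding approx_alt by (metis cv.simps(2))
    have s1: "v1 w = -\<infinity> \<longleftrightarrow> v2 w = -\<infinity>" for w using S0[of "Clk w"] unfolding sim1_def by simp
    show "holds r (ediff (?u1 y) (?u1 z)) c = holds r (ediff (?u2 y) (?u2 z)) c"
      using o s1 by (auto simp: ediff_minf)
  qed
  then show ?thesis using True by blast
next
  case False
  then obtain \<alpha> where al: "a = ereal \<alpha>" using a0 by (cases a) auto
  have al0: "\<alpha> \<le> 0" using a0 al by simp
  obtain t' where t': "0 \<le> t'" "t' < 1" and tP: "\<forall>z. small M v1 z \<longrightarrow>
     (frac (rv v1 z) \<le> frac \<alpha> \<longleftrightarrow> frac (rv v2 z) \<le> t') \<and> (frac \<alpha> \<le> frac (rv v1 z) \<longleftrightarrow> t' \<le> frac (rv v2 z))"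
    using fpairs_ext[OF a, of "frac \<alpha>"] by (auto simp: frac_lt_1)
  define \<beta> where "\<beta> = of_int (floor \<alpha>) + t'"
  have fb: "floor \<beta> = floor \<alpha>" unfolding \<beta>_def using t' by (intro floor_unique) auto
  have frb: "frac \<beta> = t'" unfolding frac_def fb unfolding \<beta>_def by simp
  have fz: "frac (rv v Zero) = 0" for v :: "'c val" by simp
  have h: "frac \<alpha> \<le> 0 \<longleftrightarrow> t' \<le> 0" using tP[rule_format, OF small_Zero] unfolding fz by blast
  have t0: "t' = 0 \<longleftrightarrow> frac \<alpha> = 0" using h t'(1) frac_ge_0[of \<alpha>] by (metis order.antisym order.refl)
  have b0: "\<beta> \<le> 0"
  proof (cases "floor \<alpha> \<le> -1")
    case True then show ?thesis unfolding \<beta>_def using t' by linarith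
  next
    case False
    then have "floor \<alpha> = 0" using al0 by linarith
    then have "\<alpha> = 0" using al0 by linarith
    then show ?thesis using t0 unfolding \<beta>_def by simp
  qed
  have S0: "sim1 M v1 v2 z" for z using approx_sim1[OF a] .
  let ?u1 = "v1(x:=ereal \<alpha>)" and ?u2 = "v2(x:=ereal \<beta>)"
  have sx: "small M ?u1 (Clk x)" using al0 unfolding small_def by simp
  have rvx: "rv ?u1 (Clk x) = \<alpha>" "rv ?u2 (Clk x) = \<beta>" unfolding rv_def by simp_all
  have oth: "z \<noteq> Clk x \<Longrightarrow> cv ?u1 z = cv v1 z \<and> cv ?u2 z = cv v2 z \<and> rv ?u1 z = rv v1 z \<and>
     rv ?u2 z = rv v2 z \<and> (small M ?u1 z = small M v1 z)" for z
    unfolding rv_def small_def cv_upd by simp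
  have "approx M ?u1 ?u2"
  proof (rule approx_intro)
    fix z show "sim1 M ?u1 ?u2 z"
    proof (cases "z = Clk x")
      case True
      then show ?thesis unfolding sim1_def using rvx fb al0 b0 sx
        by (simp add: rv_def)
    next
      case False
      then show ?thesis using S0[of z] oth[OF False] unfolding sim1_def by simp
    qed
  next
    fix y z assume sy: "small M ?u1 y" and sz: "small M ?u1 z"
    show "(frac (rv ?u1 y) \<le> frac (rv ?u1 z)) = (frac (rv ?u2 y) \<le> frac (rv ?u2 z))"
    proof (cases "y = Clk x"; cases "z = Clk x")
      assume "y = Clk x" "z \<noteq> Clk x"
      then show ?thesis using oth[of z] sz tP rvx frb by simp
    next
      assume "y \<noteq> Clk x" "z = Clk x"
      then show ?thesis using oth[of y] sy tP rvx frb by simp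
    next
      assume "y \<noteq> Clk x" "z \<noteq> Clk x"
      then show ?thesis using oth[of y] oth[of z] sy sz a unfolding approx_alt by simp
    qed simp
  next
    fix y z r c assume ns: "\<not> (small M ?u1 (Clk y) \<and> small M ?u1 (Clk z))" and c: "cond2 M c"
    show "holds r (ediff (?u1 y) (?u1 z)) c = holds r (ediff (?u2 y) (?u2 z)) c"
    proof (cases "y = x"; cases "z = x")
      assume yz: "y \<noteq> x" "z \<noteq> x"
      then show ?thesis using a c unfolding approx_alt by (metis cv.simps(2) fun_upd_other)
    next
      assume yz: "y = x" "z \<noteq> x"
      then have nz: "\<not> small M v1 (Clk z)" using ns sx oth[of "Clk z"] by auto
      from nonsmall_cases[OF nz S0] show ?thesis
      proof (elim disjE exE conjE)
        fix p1 p2 assume "cv v1 (Clk z) = ereal p1" "cv v2 (Clk z) = ereal p2" "real M < p1" "real M < p2"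
        moreover have "real M < p1 - \<alpha>" "real M < p2 - \<beta>" using calculation al0 b0 by linarith+
        ultimately show ?thesis using yz big2[OF _ c, of "p1 - \<alpha>" r] big2[OF _ c, of "p2 - \<beta>" r] by simp
      qed (use yz in \<open>auto simp: ediff_def\<close>)
    next
      assume yz: "y \<noteq> x" "z = x"
      then have nz: "\<not> small M v1 (Clk y)" using ns sx oth[of "Clk y"] by auto
      from nonsmall_cases[OF nz S0] show ?thesis
      proof (elim disjE exE conjE)
        fix p1 p2 assume "cv v1 (Clk y) = ereal p1" "cv v2 (Clk y) = ereal p2" "real M < p1" "real M < p2"
        moreover have "real M < p1 - \<alpha>" "real M < p2 - \<beta>" using calculation al0 b0 by linarith+
        ultimately show ?thesis using yz big2[OF _ c, of "p1 - \<alpha>" r] big2[OF _ c, of "p2 - \<beta>" r] by simp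
      qed (use yz in \<open>auto simp: ediff_def\<close>)
    qed (use ns sx in simp)
  qed
  then show ?thesis using al by blast
qed



lemma G_order:
  fixes f1 g1 f2 g2 t t' :: real
  assumes "0 \<le> f1" "f1 < 1" "0 \<le> g1" "g1 < 1" "0 \<le> f2" "f2 < 1" "0 \<le> g2" "g2 < 1"
    "0 \<le> t" "t < 1" "0 \<le> t'" "t' < 1"
    "f1 \<le> g1 \<longleftrightarrow> f2 \<le> g2" "f1 < t \<longleftrightarrow> f2 < t'" "g1 < t \<longleftrightarrow> g2 < t'"
  shows "(if f1 < t then f1 - t + 1 else f1 - t) \<le> (if g1 < t then g1 - t + 1 else g1 - t) \<longleftrightarrow>
         (if f2 < t' then f2 - t' + 1 else f2 - t') \<le> (if g2 < t' then g2 - t' + 1 else g2 - t')"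
proof (cases "f1 < t"; cases "g1 < t")
  assume "f1 < t" "g1 < t" then show ?thesis using assms by simp
next
  assume "f1 < t" "\<not> g1 < t" then show ?thesis using assms by simp
next
  assume "\<not> f1 < t" "g1 < t" then show ?thesis using assms by simp
next
  assume "\<not> f1 < t" "\<not> g1 < t" then show ?thesis using assms by simp
qed

lemma G_zero:
  fixes f t :: real
  assumes "0 \<le> f" "t < 1"
  shows "(if f < t then f - t + 1 else f - t) = 0 \<longleftrightarrow> f = t"
  using assms by auto

lemma le_int_iff: "(s::real) \<le> of_int m \<longleftrightarrow> floor s < m \<or> (floor s = m \<and> frac s = 0)"
proof (cases "s < of_int m")
  case True then show ?thesis by (simp add: floor_less_iff)
next
  case False
  then have "\<not> floor s < m" by (simp add: floor_less_iff)
  moreover have "s \<le> of_int m \<longleftrightarrow> (floor s = m \<and> frac s = 0)"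
  proof
    assume "s \<le> of_int m" then have "s = of_int m" using False by simp
    then show "floor s = m \<and> frac s = 0" by (simp add: frac_def)
  next
    assume "floor s = m \<and> frac s = 0" then show "s \<le> of_int m" by (simp add: frac_def)
  qed
  ultimately show ?thesis by simp
qed

lemma cv_shift[simp]: "cv (shift v d) (Clk y) = v y + ereal d" "cv (shift v d) Zero = 0"
  by (simp_all add: shift_def)

lemma shift_apply[simp]: "shift v d y = v y + ereal d"
  by (simp add: shift_def)

lemma ediff_shift: "ediff (a + ereal d) (b + ereal d) = ediff a b"
  unfolding ediff_def by (cases a; cases b) auto


lemma sim1_fin: "cv u1 z = ereal r1 \<Longrightarrow> cv u2 z = ereal r2 \<Longrightarrow> floor r1 = floor r2 \<Longrightarrow>
  (r1 \<le> real M \<longleftrightarrow> r2 \<le> real M) \<Longrightarrow> sim1 M u1 u2 z"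
  by (simp add: sim1_def small_def rv_def)

lemma approx_shift:
  fixes v1 v2 :: "'c::finite val"
  assumes a: "approx M v1 v2" and d1: "0 \<le> d1"
  shows "\<exists>d2\<ge>0. approx M (shift v1 d1) (shift v2 d2)"
proof -
  define t where "t = frac (- d1)"
  have t: "0 \<le> t" "t < 1" unfolding t_def by (rule frac_ge_0, rule frac_lt_1)
  obtain t' where t': "0 \<le> t'" "t' < 1" and tP: "\<forall>z. small M v1 z \<longrightarrow>
     (frac (rv v1 z) \<le> t \<longleftrightarrow> frac (rv v2 z) \<le> t') \<and> (t \<le> frac (rv v1 z) \<longleftrightarrow> t' \<le> frac (rv v2 z))"
    using fpairs_ext[OF a t] by blast
  have fz: "frac (rv v Zero) = 0" for v :: "'c val" by simp
  have h: "t \<le> 0 \<longleftrightarrow> t' \<le> 0" using tP[rule_format, OF small_Zero] unfolding fz by blast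
  have t0: "t' = 0 \<longleftrightarrow> t = 0" using h t'(1) t(1) by (smt (verit))
  define C where "C = ceiling d1"
  define d2 where "d2 = of_int C - t'"
  have fl: "floor (t' - of_int C) = - C" using t' by (intro floor_unique) auto
  have ft2: "frac (- d2) = t'" unfolding d2_def frac_def using fl by simp
  have cd2: "ceiling d2 = C" unfolding ceiling_def d2_def using fl by simp
  have d2: "0 \<le> d2"
  proof (cases "C \<ge> 1")
    case True then show ?thesis unfolding d2_def using t' by linarith
  next
    case False
    have "d1 \<le> of_int C" unfolding C_def by simp
    then have "C = 0" "d1 = 0" using False d1 unfolding C_def by linarith+
    then show ?thesis unfolding d2_def using t0 t_def by simp
  qed
  have S0: "sim1 M v1 v2 z" for z using approx_sim1[OF a] .
  let ?w1 = "shift v1 d1" and ?w2 = "shift v2 d2"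
  define G where "G = (\<lambda>f t::real. if f < t then f - t + 1 else f - t)"
  have key: "cv ?w1 (Clk y) = ereal (rv ?w1 (Clk y)) \<and> cv ?w2 (Clk y) = ereal (rv ?w2 (Clk y)) \<and>
     floor (rv ?w1 (Clk y)) = floor (rv ?w2 (Clk y)) \<and>
     frac (rv ?w1 (Clk y)) = G (frac (rv v1 (Clk y))) t \<and>
     frac (rv ?w2 (Clk y)) = G (frac (rv v2 (Clk y))) t' \<and>
     (frac (rv v1 (Clk y)) < t \<longleftrightarrow> frac (rv v2 (Clk y)) < t') \<and>
     (frac (rv v1 (Clk y)) = t \<longleftrightarrow> frac (rv v2 (Clk y)) = t')"
    if sy: "small M v1 (Clk y)" for y
  proof -
    have sy2: "small M v2 (Clk y)" using sy sim1_small S0 by blast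
    obtain p1 p2 where e1: "v1 y = ereal p1" and e2: "v2 y = ereal p2"
      using small_fin[OF sy] small_fin[OF sy2] by simp
    have rp: "rv v1 (Clk y) = p1" "rv v2 (Clk y) = p2" unfolding rv_def by (simp_all add: e1 e2)
    have r1: "rv ?w1 (Clk y) = p1 + d1" and r2: "rv ?w2 (Clk y) = p2 + d2"
      unfolding rv_def by (simp_all add: e1 e2 shift_def)
    have c1: "cv ?w1 (Clk y) = ereal (p1 + d1)" and c2: "cv ?w2 (Clk y) = ereal (p2 + d2)"
      by (simp_all add: e1 e2 shift_def)
    have fe: "floor p1 = floor p2" using S0[of "Clk y"] sy rp unfolding sim1_def by auto
    have T: "(frac p1 < t \<longleftrightarrow> frac p2 < t')" "(frac p1 = t \<longleftrightarrow> frac p2 = t')"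
      using tP[rule_format, OF sy] unfolding rp by (auto simp: not_le[symmetric])
    have s1: "floor (p1 + d1) = floor p1 + C - (if frac p1 < t then 1 else 0)"
      "frac (p1 + d1) = (if frac p1 < t then frac p1 - t + 1 else frac p1 - t)"
      using shift_real[of p1 d1] unfolding t_def[symmetric] C_def[symmetric] by simp_all
    have s2: "floor (p2 + d2) = floor p2 + C - (if frac p2 < t' then 1 else 0)"
      "frac (p2 + d2) = (if frac p2 < t' then frac p2 - t' + 1 else frac p2 - t')"
      using shift_real[of p2 d2] unfolding ft2 cd2 by simp_all
    show ?thesis
      unfolding r1 r2 c1 c2 rp G_def using s1 s2 fe T by simp
  qed
  have smallw: "small M ?w1 (Clk y) \<Longrightarrow> small M v1 (Clk y)" for y
    unfolding small_def using d1 by (cases "v1 y") auto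
  have fr0: "frac (0::real) = 0" by simp
  have fz0: "frac x \<le> 0 \<longleftrightarrow> frac x = 0" for x :: real using frac_ge_0[of x] by (intro iffI; linarith)
  have KA: "frac (rv ?w1 (Clk y)) = G (frac (rv v1 (Clk y))) t"
           "frac (rv ?w2 (Clk y)) = G (frac (rv v2 (Clk y))) t'"
           "(frac (rv v1 (Clk y)) < t \<longleftrightarrow> frac (rv v2 (Clk y)) < t')"
           "(frac (rv v1 (Clk y)) = t \<longleftrightarrow> frac (rv v2 (Clk y)) = t')"
           "cv ?w1 (Clk y) = ereal (rv ?w1 (Clk y))" "cv ?w2 (Clk y) = ereal (rv ?w2 (Clk y))"
           "floor (rv ?w1 (Clk y)) = floor (rv ?w2 (Clk y))"
    if sy: "small M v1 (Clk y)" for y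
    using key[OF sy] by blast+
  have Gz: "G f1 t = 0 \<longleftrightarrow> f1 = t" "G f2 t' = 0 \<longleftrightarrow> f2 = t'" if "0 \<le> f1" "0 \<le> f2" for f1 f2
    unfolding G_def using G_zero[OF that(1) t(2)] G_zero[OF that(2) t'(2)] by blast+
  have g1: "frac (rv ?w1 (Clk y)) = 0 \<longleftrightarrow> frac (rv ?w2 (Clk y)) = 0" if sy: "small M v1 (Clk y)" for y
    unfolding KA(1,2)[OF sy] Gz[OF frac_ge_0 frac_ge_0] using KA(4)[OF sy] by blast
  have "approx M ?w1 ?w2"
  proof (rule approx_intro)
    fix z show "sim1 M ?w1 ?w2 z"
    proof (cases z)
      case Zero then show ?thesis by (simp add: sim1_def)
    next
      case (Clk y)
      show ?thesis
      proof (cases "small M v1 (Clk y)")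
        case True
        have "rv ?w1 (Clk y) \<le> of_int (int M) \<longleftrightarrow> rv ?w2 (Clk y) \<le> of_int (int M)"
          unfolding le_int_iff by (simp only: KA(7)[OF True] g1[OF True])
        then have le: "rv ?w1 (Clk y) \<le> real M \<longleftrightarrow> rv ?w2 (Clk y) \<le> real M" by simp
        show ?thesis unfolding Clk by (rule sim1_fin[OF KA(5,6,7)[OF True] le])
      next
        case False
        from nonsmall_cases[OF False S0] show ?thesis
        proof (elim disjE exE conjE)
          fix p1 p2 assume "cv v1 (Clk y) = ereal p1" "cv v2 (Clk y) = ereal p2" "real M < p1" "real M < p2"
          moreover have "real M < p1 + d1" "real M < p2 + d2" using calculation d1 d2 by linarith+
          ultimately show ?thesis unfolding sim1_def small_def Clk by simp
        qed (simp_all add: sim1_def small_def Clk)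
      qed
    qed
  next
    fix y z assume sy: "small M ?w1 y" and sz: "small M ?w1 z"
    show "(frac (rv ?w1 y) \<le> frac (rv ?w1 z)) = (frac (rv ?w2 y) \<le> frac (rv ?w2 z))"
    proof (cases y; cases z)
      fix y' z' assume Y: "y = Clk y'" and Z: "z = Clk z'"
      have s1: "small M v1 (Clk y')" "small M v1 (Clk z')" using sy sz Y Z smallw by blast+
      have o: "frac (rv v1 (Clk y')) \<le> frac (rv v1 (Clk z')) \<longleftrightarrow> frac (rv v2 (Clk y')) \<le> frac (rv v2 (Clk z'))"
        using a s1 unfolding approx_alt by blast
      show ?thesis unfolding Y Z KA(1,2)[OF s1(1)] KA(1,2)[OF s1(2)] G_def
        by (rule G_order[OF frac_ge_0 frac_lt_1 frac_ge_0 frac_lt_1 frac_ge_0 frac_lt_1 frac_ge_0 frac_lt_1 t t' o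
             KA(3)[OF s1(1)] KA(3)[OF s1(2)]])
    next
      fix y' assume Y: "y = Clk y'" and Z: "z = Zero"
      have s1: "small M v1 (Clk y')" using sy Y smallw by blast
      show ?thesis unfolding Y Z rv_Zero fr0 fz0 by (rule g1[OF s1])
    qed simp_all
  next
    fix y z r c assume c: "cond2 M c"
    show "holds r (ediff (?w1 y) (?w1 z)) c = holds r (ediff (?w2 y) (?w2 z)) c"
      using a c unfolding approx_alt shift_def ediff_shift by (metis cv.simps(2))
  qed
  then show ?thesis using d2 by blast
qed



lemma approx_guard:
  assumes a: "approx M v1 v2" and c: "\<forall>(x,y,r,c)\<in>set g. cond2 M c"
  shows "sat v1 g = sat v2 g"
  unfolding sat_def
proof (intro ball_cong refl)
  fix atm assume "atm \<in> set g"
  moreover obtain x y r c where at: "atm = (x,y,r,c)" by (cases atm) auto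
  ultimately have "cond2 M c" using c by auto
  then show "sat_atom v1 atm = sat_atom v2 atm" using a unfolding at approx_alt by simp
qed

lemma approx_is_val:
  assumes a: "approx M u1 u2" and v: "is_val XF u1"
  shows "is_val XF u2 \<and> (\<forall>x. u1 x = 0 \<longrightarrow> u2 x = 0)"
proof -
  have c0: "cond1 M 0" unfolding cond1_def by (intro disjI2 exI[of _ 0]) simp
  have h: "holds r (u1 x) 0 \<longleftrightarrow> holds r (u2 x) 0" for r x
    using a c0 unfolding approx_alt by (metis cv.simps(2))
  have le: "u1 x \<le> 0 \<longleftrightarrow> u2 x \<le> 0" and lt: "u1 x < 0 \<longleftrightarrow> u2 x < 0" for x
    using h[of Le x] h[of Lt x] by simp_all
  have "is_val XF u2" unfolding is_val_def
  proof (intro allI conjI impI)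
    fix x assume "x \<in> XF" then have "u1 x \<le> 0" using v unfolding is_val_def by blast
    then show "u2 x \<le> 0" using le by blast
  next
    fix x assume "x \<notin> XF" then have "0 \<le> u1 x" using v unfolding is_val_def by blast
    then have "\<not> u1 x < 0" by simp
    then have "\<not> u2 x < 0" using lt by blast
    then show "0 \<le> u2 x" by simp
  qed
  moreover have "u2 x = 0" if "u1 x = 0" for x
  proof -
    have "u2 x \<le> 0" "\<not> u2 x < 0" using le[of x] lt[of x] that by simp_all
    then show ?thesis by simp
  qed
  ultimately show ?thesis by blast
qed

lemma approx_change_gen:
  fixes S :: "'c::finite set"
  assumes "finite S"
  shows "\<forall>v1 v2 v1'. approx M v1 v2 \<longrightarrow> (\<forall>x. x \<notin> S \<longrightarrow> v1' x = v1 x) \<longrightarrow> (\<forall>x\<in>S. v1' x \<le> 0) \<longrightarrow>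
    (\<exists>v2'. approx M v1' v2' \<and> (\<forall>x. x \<notin> S \<longrightarrow> v2' x = v2 x))"
  using assms
proof (induction S rule: finite_induct)
  case empty
  show ?case
  proof (intro allI impI)
    fix v1 v2 v1' :: "'c val"
    assume "approx M v1 v2" "\<forall>x. x \<notin> {} \<longrightarrow> v1' x = v1 x"
    then have "v1' = v1" by auto
    then show "\<exists>v2'. approx M v1' v2' \<and> (\<forall>x. x \<notin> {} \<longrightarrow> v2' x = v2 x)"
      using \<open>approx M v1 v2\<close> by blast
  qed
next
  case (insert x S)
  show ?case
  proof (intro allI impI)
    fix v1 v2 v1' :: "'c val"
    assume a: "approx M v1 v2" and o: "\<forall>z. z \<notin> insert x S \<longrightarrow> v1' z = v1 z"
      and n: "\<forall>z\<in>insert x S. v1' z \<le> 0"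
    obtain b where b: "approx M (v1(x := v1' x)) (v2(x := b))"
      using approx_upd[OF a, of "v1' x" x] n by auto
    have o2: "\<forall>z. z \<notin> S \<longrightarrow> v1' z = (v1(x := v1' x)) z" using o by auto
    obtain v2' where "approx M v1' v2'" "\<forall>z. z \<notin> S \<longrightarrow> v2' z = (v2(x := b)) z"
      using insert.IH b o2 n by blast
    then show "\<exists>v2'. approx M v1' v2' \<and> (\<forall>z. z \<notin> insert x S \<longrightarrow> v2' z = v2 z)"
      by auto
  qed
qed

lemma approx_change:
  fixes v1 v2 :: "'c::finite val"
  assumes a: "approx M v1 v2" and v1': "v1' \<in> change XF R v1"
  shows "\<exists>v2'\<in>change XF R v2. approx M v1' v2'"
proof -
  have iv: "is_val XF v1'" and z: "\<forall>x\<in>R - XF. v1' x = 0" and o: "\<forall>x. x \<notin> R \<longrightarrow> v1' x = v1 x"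
    using v1' unfolding change_def by auto
  have n: "\<forall>x\<in>R. v1' x \<le> 0" using iv z unfolding is_val_def by (metis Diff_iff order.refl)
  obtain v2' where ap: "approx M v1' v2'" and o2: "\<forall>x. x \<notin> R \<longrightarrow> v2' x = v2 x"
    using approx_change_gen[of R M, OF finite_subset[OF subset_UNIV finite_UNIV]] a o n by blast
  have "is_val XF v2' \<and> (\<forall>x. v1' x = 0 \<longrightarrow> v2' x = 0)" using approx_is_val[OF ap iv] .
  then have "v2' \<in> change XF R v2" unfolding change_def using z o2 by auto
  then show ?thesis using ap by blast
qed

lemma prog_guards_Cons: "prog_guards (i # p) = (case i of Guard g \<Rightarrow> set g | Change _ \<Rightarrow> {}) \<union> prog_guards p"
  unfolding prog_guards_def by simp

lemma approx_exec:
  fixes v1 v2 :: "'c::finite val"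
  assumes "\<forall>(x,y,r,c)\<in>prog_guards p. cond2 M c" and "approx M v1 v2" and "v1' \<in> exec XF p v1"
  shows "\<exists>v2'\<in>exec XF p v2. approx M v1' v2'"
  using assms
proof (induction p arbitrary: v1 v2)
  case Nil
  then show ?case by simp
next
  case (Cons i p)
  have cp: "\<forall>(x,y,r,c)\<in>prog_guards p. cond2 M c" using Cons.prems(1) unfolding prog_guards_Cons by blast
  show ?case
  proof (cases i)
    case (Guard g)
    have cg: "\<forall>(x,y,r,c)\<in>set g. cond2 M c" using Cons.prems(1) unfolding prog_guards_Cons Guard by auto
    have s: "sat v1 g" "v1' \<in> exec XF p v1" using Cons.prems(3) unfolding Guard by (auto split: if_splits)
    then have "sat v2 g" using approx_guard[OF Cons.prems(2) cg] by simp
    then show ?thesis using Cons.IH[OF cp Cons.prems(2) s(2)] unfolding Guard by simp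
  next
    case (Change R)
    from Cons.prems(3) obtain u1 where u1: "u1 \<in> change XF R v1" "v1' \<in> exec XF p u1"
      unfolding Change by auto
    obtain u2 where u2: "u2 \<in> change XF R v2" "approx M u1 u2"
      using approx_change[OF Cons.prems(2) u1(1)] by blast
    obtain v2' where "v2' \<in> exec XF p u2" "approx M v1' v2'"
      using Cons.IH[OF cp u2(2) u1(2)] by blast
    then show ?thesis using u2(1) unfolding Change by auto
  qed
qed

theorem lemma8:
  fixes A :: "('q, 's, 'c::finite) gta" and XF :: "'c set" and M :: nat
  assumes "wf_gta A" and "safe XF A" and "bounded_by M A"
  shows "ta_bisim XF A (approx M)"
proof -
  have cst: "\<forall>(x,y,r,c)\<in>prog_guards p. cond2 M c" if t: "(q, a, p, q') \<in> trans A" for q a p q'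
  proof (clarify)
    fix x y r c assume at: "(x,y,r,c) \<in> prog_guards p"
    then have ta: "(x,y,r,c) \<in> trans_atoms A" unfolding trans_atoms_def using t by blast
    have W: "\<forall>(x, y, r, c)\<in>trans_atoms A \<union> init_atoms A. is_const c"
      using assms(1) unfolding wf_gta_def by (elim conjE) assumption
    then have ic: "is_const c" using ta by fastforce
    have B: "\<forall>(x, y, r, c)\<in>trans_atoms A. \<bar>c\<bar> \<noteq> \<infinity> \<longrightarrow> \<bar>c\<bar> \<le> ereal (real M)"
      using assms(3) unfolding bounded_by_def .
    have bd: "\<bar>c\<bar> \<noteq> \<infinity> \<longrightarrow> \<bar>c\<bar> \<le> ereal (real M)" using B ta by fastforce
    from ic consider "c = \<infinity>" | "c = -\<infinity>" | k :: int where "c = ereal (real_of_int k)"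
      unfolding is_const_def by blast
    then show "cond2 M c"
    proof cases
      case 3
      then have "\<bar>real_of_int k\<bar> \<le> real M" using bd by simp
      then have "\<bar>k\<bar> \<le> int M" by linarith
      then show ?thesis unfolding cond2_def using 3 by blast
    qed (simp_all add: cond2_def)
  qed
  have sim: "ta_sim XF A (approx M)"
    unfolding ta_sim_def
  proof (intro allI impI conjI)
    fix v1 v2 :: "'c val" assume h: "is_val XF v1 \<and> is_val XF v2 \<and> approx M v1 v2"
    fix d1 :: real assume d: "0 \<le> d1 \<and> is_val XF (shift v1 d1)"
    obtain d2 where "0 \<le> d2" "approx M (shift v1 d1) (shift v2 d2)"
      using approx_shift[of M v1 v2 d1] h d by blast
    then show "\<exists>d2\<ge>0. is_val XF (shift v2 d2) \<and> approx M (shift v1 d1) (shift v2 d2)"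
      using approx_is_val d by blast
  next
    fix v1 v2 :: "'c val" assume h: "is_val XF v1 \<and> is_val XF v2 \<and> approx M v1 v2"
    fix t q q' v1' assume st: "step XF A q v1 t q' v1'"
    then obtain a p where t: "t \<in> trans A" "t = (q, a, p, q')" "v1' \<in> exec XF p v1"
      unfolding step_def by blast
    obtain v2' where "v2' \<in> exec XF p v2" "approx M v1' v2'"
      using approx_exec[OF cst[of q a p q'] _ t(3)] t h by blast
    then show "\<exists>v2'. step XF A q v2 t q' v2' \<and> approx M v1' v2'"
      unfolding step_def using t by blast
  qed
  have eq: "(\<lambda>v1 v2. approx M v2 v1) = approx M" by (intro ext iffI) (auto intro: approx_sym)
  show ?thesis unfolding ta_bisim_def eq using sim by blast
qed

end
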